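(* Let $(X,\mathcal{B},\mu)$ be a measure space, $\varphi:X\to X$ a measurable map, $I$ a countable set and $\{B_i\}_{i\in I}$ a family of measurable sets of positive measure. Then the following are equivalent: (i) there exists $A\subseteq\mathbb{N}$ with $\overline{\mathrm{dens}}(A)=1$ such that $\lim_{n\in A}\mu(\varphi^{-n}(B_i))=0$ for all $i\in I$; (ii) there exists an increasing sequence $(M_j)$ in $\mathbb{N}$ such that for every $k\in\mathbb{N}$ and $i\in I$ there is $n_{k,i}\in\mathbb{N}$ with \[\operatorname{card}\{1\le n\le M_j:\ \mu(\varphi^{-n}(B_i))<k^{-1}\}\ge M_j(1-k^{-1})\quad\text{for all } j\ge n_{k,i}.\]
   Context: For $A\subseteq\mathbb{N}$, $\overline{\mathrm{dens}}(A)=\limsup_{N\to\infty}\frac{\operatorname{card}(A\cap[1,N])}{N}$. The notation $\lim_{n\in A}a_n=0$ means $a_n\to0$ as $n\to\infty$ with $n\in A$. *)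

theory Defs
  imports "HOL-Analysis.Analysis" "HOL-Library.Liminf_Limsup"
begin

definition upper_dens :: "nat set \<Rightarrow> ereal" where
  "upper_dens A = limsup (\<lambda>N. ereal (real (card (A \<inter> {1..N})) / real N))"

end

theory Submission
  imports Defs
begin

lemma count_inter:
  fixes P :: "'i \<Rightarrow> nat \<Rightarrow> bool"
  assumes "finite F" "\<forall>i\<in>F. real (card {n\<in>{1..M}. P i n}) \<ge> real M * (1 - e)"
  shows "real (card {n\<in>{1..M}. \<forall>i\<in>F. P i n}) \<ge> real M * (1 - real (card F) * e)"
  using assms
proof (induction F rule: finite_induct)
  case empty
  have "{n\<in>{1..M}. \<forall>i\<in>{}. P i n} = {1..M}" by auto
  then show ?case by simp
next
  case (insert i F)
  let ?X = "{n\<in>{1..M}. P i n}"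
  let ?Y = "{n\<in>{1..M}. \<forall>i\<in>F. P i n}"
  have eq: "{n\<in>{1..M}. \<forall>j\<in>insert i F. P j n} = ?X \<inter> ?Y" by auto
  have "card ?X + card ?Y = card (?X \<union> ?Y) + card (?X \<inter> ?Y)" by (rule card_Un_Int) auto
  moreover have "card (?X \<union> ?Y) \<le> M"
  proof -
    have s: "?X \<union> ?Y \<subseteq> {1..M}" by auto
    have "card (?X \<union> ?Y) \<le> card {1..M}" by (rule card_mono[OF _ s]) simp
    then show ?thesis by simp
  qed
  ultimately have 1: "real (card (?X \<inter> ?Y)) \<ge> real (card ?X) + real (card ?Y) - real M" by linarith
  have 2: "real (card ?X) \<ge> real M * (1 - e)" using insert.prems by auto
  have 3: "real (card ?Y) \<ge> real M * (1 - real (card F) * e)" using insert by auto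
  have 4: "real M * (1 - real (card (insert i F)) * e) = real M * (1 - e) + real M * (1 - real (card F) * e) - real M"
    using insert by (simp add: algebra_simps)
  show ?case unfolding eq 4 using 1 2 3 by linarith
qed

lemma dir1:
  fixes a :: "'i \<Rightarrow> nat \<Rightarrow> ennreal"
  assumes dens: "upper_dens A = 1"
    and lim: "\<forall>i\<in>I. ((\<lambda>n. a i n) \<longlongrightarrow> 0) (inf sequentially (principal A))"
  shows "\<exists>Ms :: nat \<Rightarrow> nat. strict_mono Ms \<and>
            (\<forall>k::nat. k \<ge> 1 \<longrightarrow> (\<forall>i\<in>I. \<exists>n_ki::nat. \<forall>j\<ge>n_ki.
               real (card {n \<in> {1..Ms j}. a i n < ennreal (1 / real k)})
                 \<ge> real (Ms j) * (1 - 1 / real k)))"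
proof -
  define r where "r N = real (card (A \<inter> {1..N})) / real N" for N
  have freq: "\<exists>N>m. r N > 1 - 1 / (real m + 1)" for m
  proof (rule ccontr)
    assume "\<not> ?thesis"
    then have "\<forall>N\<ge>Suc m. r N \<le> 1 - 1 / (real m + 1)" by (metis Suc_le_eq not_less)
    then have "\<forall>N\<ge>Suc m. ereal (r N) \<le> ereal (1 - 1 / (real m + 1))" by simp
    then have "eventually (\<lambda>N. ereal (r N) \<le> ereal (1 - 1 / (real m + 1))) sequentially"
      using eventually_sequentially by blast
    then have "upper_dens A \<le> ereal (1 - 1 / (real m + 1))"
      unfolding upper_dens_def r_def[abs_def] by (rule Limsup_bounded)
    moreover have "ereal (1 - 1 / (real m + 1)) < 1" by simp
    ultimately show False using dens by simp
  qed
  then obtain g where g: "\<And>m. g m > m \<and> r (g m) > 1 - 1 / (real m + 1)" by metis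
  define Ms where "Ms = rec_nat (g 0) (\<lambda>_ x. g x)"
  have Ms0: "Ms 0 = g 0" and MsS: "\<And>j. Ms (Suc j) = g (Ms j)" by (simp_all add: Ms_def)
  have sm: "strict_mono Ms" unfolding strict_mono_Suc_iff using g MsS by simp
  have ge: "j \<le> Ms j" for j using seq_suble[OF sm] .
  have rat: "r (Ms j) \<ge> 1 - 1 / real j" if jj: "j \<ge> 1" for j
  proof -
    obtain j' where j': "j = Suc j'" using jj by (cases j) auto
    have "r (Ms j) > 1 - 1 / (real (Ms j') + 1)" using g MsS j' by simp
    moreover have "1 / (real (Ms j') + 1) \<le> 1 / real j"
      using ge[of j'] j' by (intro divide_left_mono) auto
    ultimately show ?thesis by linarith
  qed
  show ?thesis
  proof (intro exI[of _ Ms] conjI sm allI impI ballI)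
    fix k :: nat and i assume k: "k \<ge> 1" and i: "i \<in> I"
    have "0 < ennreal (1 / real k)" using k by simp
    then have "eventually (\<lambda>n. a i n < ennreal (1 / real k)) (inf sequentially (principal A))"
      using lim i order_tendsto_iff by metis
    then obtain N0 where N0: "\<And>n. n \<ge> N0 \<Longrightarrow> n \<in> A \<Longrightarrow> a i n < ennreal (1 / real k)"
      unfolding eventually_inf_principal eventually_sequentially by blast
    show "\<exists>n_ki. \<forall>j\<ge>n_ki. real (card {n \<in> {1..Ms j}. a i n < ennreal (1 / real k)})
                 \<ge> real (Ms j) * (1 - 1 / real k)"
    proof (intro exI[of _ "2 * k * (N0 + 1)"] allI impI)
      fix j assume j: "2 * k * (N0 + 1) \<le> j"
      let ?m = "Ms j"
      let ?S = "{n \<in> {1..?m}. a i n < ennreal (1 / real k)}"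
      have sub: "A \<inter> {1..?m} \<subseteq> ?S \<union> {1..N0}" using N0 by force
      have "card (A \<inter> {1..?m}) \<le> card (?S \<union> {1..N0})" by (rule card_mono[OF _ sub]) auto
      also have "\<dots> \<le> card ?S + N0" using card_Un_le[of ?S "{1..N0}"] by simp
      finally have c1: "real (card (A \<inter> {1..?m})) \<le> real (card ?S) + real N0" by linarith
      have j1: "j \<ge> 1" "real j \<ge> 2 * real k * (real N0 + 1)" 
      proof -
        have "1 \<le> 2*k*(N0+1)" using k by simp
        then show "j \<ge> 1" using j by linarith
        have "real (2*k*(N0+1)) \<le> real j" using j of_nat_mono by blast
        then show "real j \<ge> 2 * real k * (real N0 + 1)" by (simp add: algebra_simps)
      qed
      have mpos: "real ?m > 0" using ge[of j] j1 by linarith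
      have "real (card (A \<inter> {1..?m})) = r ?m * real ?m" using mpos by (simp add: r_def)
      also have "\<dots> \<ge> (1 - 1 / real j) * real ?m" using rat[OF j1(1)] mpos by (intro mult_right_mono) auto
      finally have c2: "real (card (A \<inter> {1..?m})) \<ge> real ?m - real ?m / real j" by (simp add: algebra_simps)
      have kpos: "real k \<ge> 1" using k by simp
      have kk: "2 * real k * (real N0 + 1) = 2 * real k * real N0 + 2 * real k" by (simp add: algebra_simps)
      have kN: "2 * real k * real N0 \<ge> 0" by simp
      have mj: "real ?m \<ge> real j" using ge[of j] by simp
      have k2j: "2 * real k \<le> real j" using j1 kk kN by linarith
      have "real ?m / real j \<le> real ?m / (2 * real k)"
        by (rule divide_left_mono[OF k2j]) (use mpos kpos j1 in auto)
      moreover have "real ?m / (2 * real k) \<ge> real N0"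
        using mj j1 kpos kk by (subst pos_le_divide_eq) (auto simp: algebra_simps)
      moreover have "real ?m * (1 - 1 / real k) = real ?m - 2 * (real ?m / (2 * real k))"
        using kpos by (simp add: field_simps)
      ultimately show "real (card ?S) \<ge> real ?m * (1 - 1 / real k)" using c1 c2 by linarith
    qed
  qed
qed

lemma aux_eq: "(x::real) * (1 - 2/d) = x*(1-1/d) - x/d"
  by (cases "d = 0") (simp_all add: field_simps)

lemma dir2:
  fixes a :: "'i \<Rightarrow> nat \<Rightarrow> ennreal"
  assumes cI: "countable I" and sm: "strict_mono Ms"
    and H: "\<forall>k::nat. k \<ge> 1 \<longrightarrow> (\<forall>i\<in>I. \<exists>n_ki::nat. \<forall>j\<ge>n_ki.
               real (card {n \<in> {1..Ms j}. a i n < ennreal (1 / real k)})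
                 \<ge> real (Ms j) * (1 - 1 / real k))"
  shows "\<exists>A :: nat set. upper_dens A = 1 \<and>
            (\<forall>i\<in>I. ((\<lambda>n. a i n) \<longlongrightarrow> 0) (inf sequentially (principal A)))"
proof -
  define F where "F k = {i\<in>I. to_nat_on I i < k}" for k
  have finF: "finite (F k)" and cardF: "card (F k) \<le> k" for k
  proof -
    have inj: "inj_on (to_nat_on I) (F k)"
      using inj_on_to_nat_on[OF cI] unfolding F_def by (rule inj_on_subset) auto
    have im: "to_nat_on I ` F k \<subseteq> {..<k}" unfolding F_def by auto
    show "finite (F k)" using finite_subset[OF im] inj finite_imageD by blast
    show "card (F k) \<le> k" using card_inj_on_le[OF inj im] by simp
  qed
  define T where "T k = {n. \<forall>i\<in>F k. a i n < ennreal (1 / real ((k+1)^2))}" for k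
  have Tmono: "T k \<subseteq> T m" if mk: "m \<le> k" for m k
  proof
    fix n assume n: "n \<in> T k"
    have "real ((m+1)^2) \<le> real ((k+1)^2)" using mk by (simp add: power_mono)
    then have "1/real((k+1)^2) \<le> 1/real((m+1)^2)"
      by (intro divide_left_mono) auto
    then have le: "ennreal (1/real((k+1)^2)) \<le> ennreal (1/real((m+1)^2))" by (rule ennreal_leI)
    have Fs: "F m \<subseteq> F k" using mk by (auto simp: F_def)
    show "n \<in> T m" unfolding T_def
    proof (intro CollectI ballI)
      fix i assume "i \<in> F m"
      then have "a i n < ennreal (1/real((k+1)^2))" using n Fs unfolding T_def by blast
      then show "a i n < ennreal (1/real((m+1)^2))" using le by (rule less_le_trans)
    qed
  qed
  have count: "\<exists>J. \<forall>j\<ge>J. real (card (T k \<inter> {1..Ms j})) \<ge> real (Ms j) * (1 - 1/real (k+1))" for k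
  proof -
    define c :: nat where "c = (k+1)^2"
    have c1: "c \<ge> 1" by (simp add: c_def)
    have "\<forall>i\<in>F k. \<exists>n. \<forall>j\<ge>n. real (card {n \<in> {1..Ms j}. a i n < ennreal (1/real c)}) \<ge> real (Ms j) * (1 - 1/real c)"
    proof -
      have Hc: "\<forall>i\<in>I. \<exists>n. \<forall>j\<ge>n. real (card {n \<in> {1..Ms j}. a i n < ennreal (1/real c)}) \<ge> real (Ms j) * (1 - 1/real c)"
        using H c1 by blast
      show ?thesis using Hc unfolding F_def by blast
    qed
    from bchoice[OF this] obtain nn where nn: "\<forall>i\<in>F k. \<forall>j\<ge>nn i. real (card {n \<in> {1..Ms j}. a i n < ennreal (1/real c)}) \<ge> real (Ms j) * (1 - 1/real c)"
      by blast
    define J where "J = Max (insert 0 (nn ` F k))"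
    show ?thesis
    proof (intro exI[of _ J] allI impI)
      fix j assume j: "J \<le> j"
      have "\<forall>i\<in>F k. real (card {n \<in> {1..Ms j}. a i n < ennreal (1/real c)}) \<ge> real (Ms j) * (1 - 1/real c)"
      proof
        fix i assume i: "i\<in>F k"
        have "nn i \<le> J" unfolding J_def using finF i by (intro Max_ge) auto
        then show "real (card {n \<in> {1..Ms j}. a i n < ennreal (1/real c)}) \<ge> real (Ms j) * (1 - 1/real c)"
          using nn i j by auto
      qed
      from count_inter[OF finF this]
      have ci: "real (card {n \<in> {1..Ms j}. \<forall>i\<in>F k. a i n < ennreal (1/real c)}) \<ge> real (Ms j) * (1 - real (card (F k)) * (1/real c))" .
      have eq: "{n \<in> {1..Ms j}. \<forall>i\<in>F k. a i n < ennreal (1/real c)} = T k \<inter> {1..Ms j}"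
        by (auto simp: T_def c_def)
      have le: "real (card (F k)) * (1/real c) \<le> 1/real (k+1)"
      proof -
        have "real (card (F k)) * (1/real c) \<le> real k * (1/real c)" using cardF[of k] by (intro mult_right_mono) auto
        also have "real k * (1/real c) \<le> 1/real(k+1)"
        proof -
          have "real k * real (k+1) \<le> real c" by (simp add: c_def power2_eq_square algebra_simps)
          then show ?thesis using c1 by (simp add: field_simps)
        qed
        finally show ?thesis .
      qed
      have "real (Ms j) * (1 - 1/real (k+1)) \<le> real (Ms j) * (1 - real (card (F k)) * (1/real c))"
        using le by (intro mult_left_mono) auto
      then show "real (card (T k \<inter> {1..Ms j})) \<ge> real (Ms j) * (1 - 1/real (k+1))"
        using ci eq by simp
    qed
  qed
  then have "\<forall>k. \<exists>J. \<forall>j\<ge>J. real (card (T k \<inter> {1..Ms j})) \<ge> real (Ms j) * (1 - 1/real (k+1))" by blast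
  from choice[OF this] obtain J where J0: "\<forall>k. \<forall>j\<ge>J k. real (card (T k \<inter> {1..Ms j})) \<ge> real (Ms j) * (1 - 1/real (k+1))"
    by blast
  have J: "\<And>k j. j \<ge> J k \<Longrightarrow> real (card (T k \<inter> {1..Ms j})) \<ge> real (Ms j) * (1 - 1/real (k+1))"
    using J0 by blast
  define idx where "idx = rec_nat (J 0) (\<lambda>k x. max (J (Suc k)) ((k+2) * (Ms x + 1)))"
  have idx0: "idx 0 = J 0" and idxS: "idx (Suc k) = max (J (Suc k)) ((k+2)*(Ms (idx k)+1))" for k
    by (simp_all add: idx_def)
  define q where "q k = Ms (idx k)" for k
  have geMs: "j \<le> Ms j" for j using seq_suble[OF sm] .
  have qgrow: "q (Suc k) \<ge> (k+2)*(q k + 1)" for k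
  proof -
    have "(k+2)*(Ms (idx k)+1) \<le> idx (Suc k)" using idxS[of k] by simp
    also have "\<dots> \<le> q (Suc k)" unfolding q_def by (rule geMs)
    finally show ?thesis by (simp add: q_def)
  qed
  have qsm: "strict_mono q" unfolding strict_mono_Suc_iff
  proof
    fix k
    have "q k + 1 \<le> (k+2)*(q k+1)" by simp
    then show "q k < q (Suc k)" using qgrow[of k] by linarith
  qed
  have idxJ: "idx k \<ge> J k" for k by (cases k) (simp_all add: idx0 idxS)
  have qcount: "real (card (T k \<inter> {1..q k})) \<ge> real (q k) * (1 - 1/real(k+1))" for k
    unfolding q_def using J idxJ by blast
  define A where "A = {n. \<forall>k. q k < n \<longrightarrow> n \<in> T k}"
  define r where "r N = real (card (A \<inter> {1..N})) / real N" for N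
  have cardle: "card (A \<inter> {1..N}) \<le> N" for N
  proof -
    have "card (A \<inter> {1..N}) \<le> card {1..N}" by (rule card_mono) auto
    then show ?thesis by simp
  qed
  have rle: "r N \<le> 1" for N
    unfolding r_def using cardle[of N] by (cases "N = 0") auto
  have rlow: "r (q (Suc k)) \<ge> 1 - 2/real(k+2)" for k
  proof -
    let ?Q = "q (Suc k)"
    let ?X = "T (Suc k) \<inter> {1..?Q}"
    let ?Y = "{1..q k}"
    have sub: "?X - ?Y \<subseteq> A \<inter> {1..?Q}"
    proof
      fix n assume n: "n \<in> ?X - ?Y"
      have "n \<in> T m" if m: "q m < n" for m
      proof -
        have "m \<le> Suc k"
        proof (rule ccontr)
          assume "\<not> m \<le> Suc k"
          then have "q (Suc k) < q m" using qsm by (simp add: strict_mono_less)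
          then show False using m n by auto
        qed
        then show ?thesis using Tmono n by blast
      qed
      then show "n \<in> A \<inter> {1..?Q}" using n by (auto simp: A_def)
    qed
    have "card ?X \<le> card ((?X - ?Y) \<union> ?Y)" by (rule card_mono) auto
    also have "\<dots> \<le> card (?X - ?Y) + card ?Y" by (rule card_Un_le)
    also have "\<dots> \<le> card (A \<inter> {1..?Q}) + q k" using card_mono[OF _ sub] by simp
    finally have c1: "real (card ?X) \<le> real (card (A \<inter> {1..?Q})) + real (q k)" by linarith
    have c2: "real (card ?X) \<ge> real ?Q * (1 - 1/real(k+2))" using qcount[of "Suc k"] by simp
    have gr: "real ?Q \<ge> real (k+2) * real (q k + 1)" using qgrow[of k] by (metis of_nat_le_iff of_nat_mult)
    have "(k+2)*(q k+1) > 0" by simp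
    then have "?Q > 0" using qgrow[of k] by linarith
    then have Qpos: "real ?Q > 0" by simp
    have qk: "real ?Q / real (k+2) \<ge> real (q k)" using gr by (simp add: field_simps)
    have e: "real ?Q * (1 - 2/real(k+2)) = real ?Q * (1 - 1/real(k+2)) - real ?Q / real (k+2)"
      by (rule aux_eq)
    have "real (card (A \<inter> {1..?Q})) \<ge> real ?Q * (1 - 2/real(k+2))"
      using c1 c2 qk e by linarith
    then show ?thesis unfolding r_def using Qpos by (simp add: pos_le_divide_eq mult.commute)
  qed
  show ?thesis
  proof (intro exI[of _ A] conjI ballI)
    show "upper_dens A = 1"
    proof (rule antisym)
      show "upper_dens A \<le> 1" unfolding upper_dens_def
        by (rule Limsup_bounded, rule always_eventually) (use rle in \<open>simp add: r_def\<close>)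
    next
      have lo: "(\<lambda>k. 1 - 2 * inverse (real (Suc k))) \<longlonglongrightarrow> (1::real)"
        using tendsto_diff[OF tendsto_const tendsto_mult[OF tendsto_const LIMSEQ_inverse_real_of_nat], of 1 2] by simp
      have rlow2: "1 - 2 * inverse (real (Suc k)) \<le> r (q (Suc k))" for k
      proof -
        have "2 / real (k+2) \<le> 2 / real (Suc k)" by (intro divide_left_mono) auto
        then show ?thesis using rlow[of k] by (simp add: inverse_eq_divide)
      qed
      have "(\<lambda>k. r (q (Suc k))) \<longlonglongrightarrow> 1"
        by (rule tendsto_sandwich[OF _ _ lo tendsto_const]) (use rlow2 rle in auto)
      then have "(\<lambda>k. ereal (r (q (Suc k)))) \<longlonglongrightarrow> ereal 1" by (simp only: lim_ereal)
      then have "limsup (\<lambda>k. ereal (r (q (Suc k)))) = ereal 1"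
        by (rule lim_imp_Limsup[OF trivial_limit_sequentially])
      then have "limsup (\<lambda>k. ereal (r (q (Suc k)))) = 1" by (simp add: one_ereal_def)
      moreover have "limsup ((\<lambda>N. ereal (r N)) \<circ> (\<lambda>k. q (Suc k))) \<le> limsup (\<lambda>N. ereal (r N))"
        by (rule limsup_subseq_mono) (use qsm in \<open>simp add: strict_mono_def\<close>)
      ultimately show "1 \<le> upper_dens A" unfolding upper_dens_def r_def by (simp add: o_def)
    qed
  next
    fix i assume i: "i \<in> I"
    show "((\<lambda>n. a i n) \<longlongrightarrow> 0) (inf sequentially (principal A))"
      unfolding order_tendsto_iff
    proof (intro conjI allI impI)
      fix l :: ennreal assume "l < 0" then show "eventually (\<lambda>n. l < a i n) (inf sequentially (principal A))" by simp
    next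
      fix u :: ennreal assume u: "0 < u"
      obtain v where v: "0 < v" "v < u" using dense[OF u] by blast
      then have "v < top" using top_greatest less_le_trans by blast
      then obtain rr where rr: "v = ennreal rr" "rr \<ge> 0" by (cases v) auto
      then have rrpos: "rr > 0" using v by simp
      obtain k0 where k0: "inverse (real (Suc k0)) < rr" using reals_Archimedean[OF rrpos] by blast
      define k where "k = max k0 (Suc (to_nat_on I i))"
      have iF: "i \<in> F k" using i by (simp add: F_def k_def)
      have "real (Suc k0) \<le> real ((k+1)^2)"
      proof -
        have "Suc k0 \<le> k + 1" by (simp add: k_def)
        also have "\<dots> \<le> (k+1)^2" by (simp add: power2_eq_square)
        finally show ?thesis by (simp only: of_nat_le_iff)
      qed
      then have "1 / real ((k+1)^2) \<le> 1 / real (Suc k0)" by (intro divide_left_mono) auto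
      then have "1 / real ((k+1)^2) < rr" using k0 by (simp add: inverse_eq_divide)
      then have "ennreal (1 / real ((k+1)^2)) < ennreal rr" using rrpos by (intro ennreal_lessI)
      then have lt: "ennreal (1 / real ((k+1)^2)) < u" using rr v by (metis less_trans)
      show "eventually (\<lambda>n. a i n < u) (inf sequentially (principal A))"
        unfolding eventually_inf_principal eventually_sequentially
      proof (intro exI[of _ "Suc (q k)"] allI impI)
        fix n assume "Suc (q k) \<le> n" "n \<in> A"
        then have "n \<in> T k" by (auto simp: A_def)
        then show "a i n < u" using iF lt unfolding T_def by (blast intro: less_trans)
      qed
    qed
  qed
qed

theorem mainTheorem8:
  fixes M :: "'a measure" and \<phi> :: "'a \<Rightarrow> 'a"
    and I :: "'i set" and B :: "'i \<Rightarrow> 'a set"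
  assumes phi_meas: "\<phi> \<in> measurable M M"
    and I_countable: "countable I"
    and B_sets: "\<And>i. i \<in> I \<Longrightarrow> B i \<in> sets M"
    and B_pos: "\<And>i. i \<in> I \<Longrightarrow> emeasure M (B i) > 0"
  shows "(\<exists>A :: nat set. upper_dens A = 1 \<and>
            (\<forall>i\<in>I. ((\<lambda>n. emeasure M ((\<phi> ^^ n) -` B i \<inter> space M)) \<longlongrightarrow> 0)
                      (inf sequentially (principal A))))
       \<longleftrightarrow>
         (\<exists>Ms :: nat \<Rightarrow> nat. strict_mono Ms \<and>
            (\<forall>k::nat. k \<ge> 1 \<longrightarrow> (\<forall>i\<in>I. \<exists>n_ki::nat. \<forall>j\<ge>n_ki.
               real (card {n \<in> {1..Ms j}.
                        emeasure M ((\<phi> ^^ n) -` B i \<inter> space M) < ennreal (1 / real k)})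
                 \<ge> real (Ms j) * (1 - 1 / real k))))"
proof
  assume "\<exists>A :: nat set. upper_dens A = 1 \<and>
            (\<forall>i\<in>I. ((\<lambda>n. emeasure M ((\<phi> ^^ n) -` B i \<inter> space M)) \<longlongrightarrow> 0)
                      (inf sequentially (principal A)))"
  then obtain A where "upper_dens A = 1" "\<forall>i\<in>I. ((\<lambda>n. emeasure M ((\<phi> ^^ n) -` B i \<inter> space M)) \<longlongrightarrow> 0)
                      (inf sequentially (principal A))" by blast
  from dir1[OF this] show "\<exists>Ms :: nat \<Rightarrow> nat. strict_mono Ms \<and>
            (\<forall>k::nat. k \<ge> 1 \<longrightarrow> (\<forall>i\<in>I. \<exists>n_ki::nat. \<forall>j\<ge>n_ki.
               real (card {n \<in> {1..Ms j}.
                        emeasure M ((\<phi> ^^ n) -` B i \<inter> space M) < ennreal (1 / real k)})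
                 \<ge> real (Ms j) * (1 - 1 / real k)))" .
next
  assume "\<exists>Ms :: nat \<Rightarrow> nat. strict_mono Ms \<and>
            (\<forall>k::nat. k \<ge> 1 \<longrightarrow> (\<forall>i\<in>I. \<exists>n_ki::nat. \<forall>j\<ge>n_ki.
               real (card {n \<in> {1..Ms j}.
                        emeasure M ((\<phi> ^^ n) -` B i \<inter> space M) < ennreal (1 / real k)})
                 \<ge> real (Ms j) * (1 - 1 / real k)))"
  then obtain Ms where "strict_mono Ms" "\<forall>k::nat. k \<ge> 1 \<longrightarrow> (\<forall>i\<in>I. \<exists>n_ki::nat. \<forall>j\<ge>n_ki.
               real (card {n \<in> {1..Ms j}.
                        emeasure M ((\<phi> ^^ n) -` B i \<inter> space M) < ennreal (1 / real k)})
                 \<ge> real (Ms j) * (1 - 1 / real k))" by blast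
  from dir2[OF I_countable this] show "\<exists>A :: nat set. upper_dens A = 1 \<and>
            (\<forall>i\<in>I. ((\<lambda>n. emeasure M ((\<phi> ^^ n) -` B i \<inter> space M)) \<longlongrightarrow> 0)
                      (inf sequentially (principal A)))" .
qed

end
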